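(* Let $A$ be a non-empty set and let $M$ be an equidecomposable magma. Then $\mathbb{M}_A\times M\cong \mathbb{M}_{(A\times M)\cup(\mathbb{M}_A\times \mathrm{Indec}(M))}$.
   Context: A magma is a set with a binary operation $+$; it is equidecomposable if $x+y=x'+y'$ implies $x=x'$ and $y=y'$. $\mathbb{M}_X$ denotes the free magma on a set $X$ (non-associative words over $X$ with $x+y=(x,y)$). The direct product $\mathbb{M}_A\times M$ carries the componentwise operation. $\mathrm{Indec}(M)=M\setminus(M+M)$ is the set of indecomposable elements of $M$ (those not of the form $x+y$). *)

theory Defs
  imports Main
begin

datatype 'a fmagma = Gen 'a | Node "'a fmagma" "'a fmagma"

primrec gens :: "'a fmagma \<Rightarrow> 'a set" where
  "gens (Gen a) = {a}"
| "gens (Node s t) = gens s \<union> gens t"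

text \<open>Carrier of the free magma on a set X; its operation is Node.\<close>
definition free_magma :: "'a set \<Rightarrow> 'a fmagma set" where
  "free_magma X = {t. gens t \<subseteq> X}"

definition magma :: "'m set \<Rightarrow> ('m \<Rightarrow> 'm \<Rightarrow> 'm) \<Rightarrow> bool" where
  "magma M f \<longleftrightarrow> (\<forall>x\<in>M. \<forall>y\<in>M. f x y \<in> M)"

definition equidecomposable :: "'m set \<Rightarrow> ('m \<Rightarrow> 'm \<Rightarrow> 'm) \<Rightarrow> bool" where
  "equidecomposable M f \<longleftrightarrow>
     (\<forall>x\<in>M. \<forall>y\<in>M. \<forall>x'\<in>M. \<forall>y'\<in>M. f x y = f x' y' \<longrightarrow> x = x' \<and> y = y')"

definition Indec :: "'m set \<Rightarrow> ('m \<Rightarrow> 'm \<Rightarrow> 'm) \<Rightarrow> 'm set" where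
  "Indec M f = M - {f x y | x y. x \<in> M \<and> y \<in> M}"

definition prod_op :: "('a \<Rightarrow> 'a \<Rightarrow> 'a) \<Rightarrow> ('b \<Rightarrow> 'b \<Rightarrow> 'b) \<Rightarrow> ('a \<times> 'b) \<Rightarrow> ('a \<times> 'b) \<Rightarrow> ('a \<times> 'b)" where
  "prod_op f g p q = (f (fst p) (fst q), g (snd p) (snd q))"

definition magma_iso :: "'m set \<Rightarrow> ('m \<Rightarrow> 'm \<Rightarrow> 'm) \<Rightarrow> 'n set \<Rightarrow> ('n \<Rightarrow> 'n \<Rightarrow> 'n) \<Rightarrow> ('m \<Rightarrow> 'n) \<Rightarrow> bool" where
  "magma_iso M f N g h \<longleftrightarrow> bij_betw h M N \<and> (\<forall>x\<in>M. \<forall>y\<in>M. h (f x y) = g (h x) (h y))"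

definition magma_isomorphic :: "'m set \<Rightarrow> ('m \<Rightarrow> 'm \<Rightarrow> 'm) \<Rightarrow> 'n set \<Rightarrow> ('n \<Rightarrow> 'n \<Rightarrow> 'n) \<Rightarrow> bool" where
  "magma_isomorphic M f N g \<longleftrightarrow> (\<exists>h. magma_iso M f N g h)"

end

theory Submission
  imports Defs
begin

primrec evalm :: "('b \<Rightarrow> 'b \<Rightarrow> 'b) \<Rightarrow> 'b fmagma \<Rightarrow> 'b" where
  "evalm op (Gen x) = x"
| "evalm op (Node s t) = op (evalm op s) (evalm op t)"

lemma free_magma_Node[simp]: "Node s t \<in> free_magma X \<longleftrightarrow> s \<in> free_magma X \<and> t \<in> free_magma X"
  by (auto simp: free_magma_def)

lemma free_magma_Gen[simp]: "Gen x \<in> free_magma X \<longleftrightarrow> x \<in> X"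
  by (auto simp: free_magma_def)

theorem theorem5p12:
  fixes A :: "'a set" and M :: "'m set" and f :: "'m \<Rightarrow> 'm \<Rightarrow> 'm"
  assumes "A \<noteq> {}"
    and "magma M f"
    and "equidecomposable M f"
  shows "magma_isomorphic
           (free_magma A \<times> M) (prod_op Node f)
           (free_magma ((Gen ` A \<times> M) \<union> (free_magma A \<times> Indec M f))) Node"
proof -
  let ?X = "(Gen ` A \<times> M) \<union> (free_magma A \<times> Indec M f)"
  let ?P = "free_magma A \<times> M"
  let ?g = "evalm (prod_op Node f)"
  have mg: "x \<in> M \<Longrightarrow> y \<in> M \<Longrightarrow> f x y \<in> M" for x y using assms(2) by (auto simp: magma_def)
  have eq: "\<lbrakk>x \<in> M; y \<in> M; x' \<in> M; y' \<in> M; f x y = f x' y'\<rbrakk> \<Longrightarrow> x = x' \<and> y = y'" for x y x' y'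
    using assms(3) unfolding equidecomposable_def by blast
  have XP: "?X \<subseteq> ?P" by (auto simp: Indec_def)
  have into: "s \<in> free_magma ?X \<Longrightarrow> ?g s \<in> ?P" for s
  proof (induction s)
    case (Gen x) thus ?case using XP by auto
  next
    case (Node s t) thus ?case by (auto simp: prod_op_def mg)
  qed
  have nodec: "x \<in> ?X \<Longrightarrow> s \<in> free_magma ?X \<Longrightarrow> t \<in> free_magma ?X \<Longrightarrow> x \<noteq> ?g (Node s t)" for x s t
  proof
    assume x: "x \<in> ?X" and s: "s \<in> free_magma ?X" and t: "t \<in> free_magma ?X" and e: "x = ?g (Node s t)"
    have "?g s \<in> ?P" "?g t \<in> ?P" using into s t by auto
    then show False using x e by (auto simp: prod_op_def Indec_def)
  qed
  have inj: "inj_on ?g (free_magma ?X)"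
  proof -
    have "\<forall>t. s \<in> free_magma ?X \<longrightarrow> t \<in> free_magma ?X \<longrightarrow> ?g s = ?g t \<longrightarrow> s = t" for s
    proof (induction s)
      case (Gen x)
      show ?case
      proof (intro allI impI)
        fix t assume a: "Gen x \<in> free_magma ?X" "t \<in> free_magma ?X" "?g (Gen x) = ?g t"
        show "Gen x = t"
        proof (cases t)
          case (Gen y) thus ?thesis using a by simp
        next
          case (Node t1 t2) thus ?thesis using a nodec[of x t1 t2] by simp
        qed
      qed
    next
      case (Node s1 s2)
      show ?case
      proof (intro allI impI)
        fix t assume a: "Node s1 s2 \<in> free_magma ?X" "t \<in> free_magma ?X" "?g (Node s1 s2) = ?g t"
        show "Node s1 s2 = t"
        proof (cases t)
          case (Gen y) thus ?thesis using a nodec[of y s1 s2] by simp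
        next
          case (Node t1 t2)
          have i: "?g s1 \<in> ?P" "?g s2 \<in> ?P" "?g t1 \<in> ?P" "?g t2 \<in> ?P" using a Node into by auto
          have "snd (?g s1) = snd (?g t1) \<and> snd (?g s2) = snd (?g t2)"
            apply (rule eq) using i a Node by (auto simp: prod_op_def)
          moreover have "fst (?g s1) = fst (?g t1) \<and> fst (?g s2) = fst (?g t2)"
            using a Node by (auto simp: prod_op_def)
          ultimately have "?g s1 = ?g t1" "?g s2 = ?g t2" by (auto simp: prod_eq_iff)
          thus ?thesis using Node.IH a Node by auto
        qed
      qed
    qed
    thus ?thesis unfolding inj_on_def by blast
  qed
  have surj: "(w, m) \<in> ?P \<Longrightarrow> \<exists>s \<in> free_magma ?X. ?g s = (w, m)" for w m
  proof (induction w arbitrary: m)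
    case (Gen a)
    hence "(Gen a, m) \<in> ?X" by auto
    thus ?case by (intro bexI[of _ "Gen (Gen a, m)"]) auto
  next
    case (Node w1 w2)
    show ?case
    proof (cases "m \<in> Indec M f")
      case True
      hence "(Node w1 w2, m) \<in> ?X" using Node.prems by auto
      thus ?thesis by (intro bexI[of _ "Gen (Node w1 w2, m)"]) auto
    next
      case False
      then obtain m1 m2 where m: "m1 \<in> M" "m2 \<in> M" "m = f m1 m2" using Node.prems by (auto simp: Indec_def)
      obtain s1 where s1: "s1 \<in> free_magma ?X" "?g s1 = (w1, m1)" using Node.IH(1)[of m1] Node.prems m by auto
      obtain s2 where s2: "s2 \<in> free_magma ?X" "?g s2 = (w2, m2)" using Node.IH(2)[of m2] Node.prems m by auto
      have "?g (Node s1 s2) = (Node w1 w2, m)" proof -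
        have "?g (Node s1 s2) = prod_op Node f (?g s1) (?g s2)" by simp
        also have "\<dots> = prod_op Node f (w1, m1) (w2, m2)" unfolding s1(2) s2(2) by (rule refl)
        also have "\<dots> = (Node w1 w2, m)" using m(3) unfolding prod_op_def by simp
        finally show ?thesis .
      qed
      thus ?thesis using s1 s2 by (intro bexI[of _ "Node s1 s2"]) auto
    qed
  qed
  have bij: "bij_betw ?g (free_magma ?X) ?P"
  proof -
    have "?g ` free_magma ?X \<subseteq> ?P" using into by blast
    moreover have "?P \<subseteq> ?g ` free_magma ?X"
    proof
      fix p assume "p \<in> ?P"
      then obtain w m where "p = (w, m)" "(w, m) \<in> ?P" by (cases p) auto
      then obtain s where "s \<in> free_magma ?X" "?g s = (w, m)" using surj[of w m] by blast
      thus "p \<in> ?g ` free_magma ?X" using \<open>p = (w, m)\<close> by (metis image_eqI)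
    qed
    ultimately show ?thesis unfolding bij_betw_def using inj by blast
  qed
  define h where "h = inv_into (free_magma ?X) ?g"
  have bh: "bij_betw h ?P (free_magma ?X)" unfolding h_def by (rule bij_betw_inv_into[OF bij])
  have hom: "h (prod_op Node f x y) = Node (h x) (h y)" if x: "x \<in> ?P" and y: "y \<in> ?P" for x y
  proof -
    have hx: "h x \<in> free_magma ?X" "?g (h x) = x" proof -
      show "h x \<in> free_magma ?X" by (rule bij_betw_apply[OF bh x])
      have "x \<in> ?g ` free_magma ?X" using bij_betw_imp_surj_on[OF bij] x by simp
      thus "?g (h x) = x" unfolding h_def by (rule f_inv_into_f)
    qed
    have hy: "h y \<in> free_magma ?X" "?g (h y) = y" proof -
      show "h y \<in> free_magma ?X" by (rule bij_betw_apply[OF bh y])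
      have "y \<in> ?g ` free_magma ?X" using bij_betw_imp_surj_on[OF bij] y by simp
      thus "?g (h y) = y" unfolding h_def by (rule f_inv_into_f)
    qed
    have e1: "?g (Node (h x) (h y)) = prod_op Node f x y" by (simp only: evalm.simps hx(2) hy(2))
    have e2: "Node (h x) (h y) \<in> free_magma ?X" using hx(1) hy(1) by (simp only: free_magma_Node)
    have "h (?g (Node (h x) (h y))) = Node (h x) (h y)" using inv_into_f_f[OF inj e2] unfolding h_def by assumption
    thus ?thesis by (simp only: e1)
  qed
  show ?thesis unfolding magma_isomorphic_def magma_iso_def using bh hom by blast
qed

end
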